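(* Let $A$ be an observable on $\mathbb C^d$ with orthonormal eigenbasis $\{\varphi_k\}_{k=0}^{d-1}$. For all unit vectors $\Phi,\Psi\in\mathbb C^d$, $$d(T_{A\Phi}\Psi,\Psi)\le d(\Psi,\Phi).$$
   Context: $\mathcal H=\mathbb C^d$ with the standard inner product; states are unit vectors. An observable $A$ is non-degenerate and identified with its orthonormal eigenbasis $\{\varphi_k\}_{k=0}^{d-1}$. Bures metric: $d(\Phi,\Psi)=\sqrt{2-2|\langle\Phi,\Psi\rangle|}$. Physical imposition operator: for a unit vector $\Phi$ (the generator state), $T_{A\Phi}\Psi=\sum_{k=0}^{d-1}|\langle\varphi_k,\Phi\rangle|\,u_k(\Psi)\,\varphi_k$, where $u_k(\Psi)=\langle\varphi_k,\Psi\rangle/|\langle\varphi_k,\Psi\rangle|$ if $\langle\varphi_k,\Psi\rangle\ne0$ and $u_k(\Psi)=1$ otherwise. Note $T_{A\Phi}\Psi$ is again a unit vector. *)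

theory Defs
  imports "HOL-Analysis.Analysis"
begin

text \<open>States live in C^d, modelled as complex ^ 'n with d = CARD('n).
  Standard inner product, conjugate-linear in the first argument.\<close>

definition cinner :: "complex ^ 'n \<Rightarrow> complex ^ 'n \<Rightarrow> complex" where
  "cinner x y = (\<Sum>i\<in>UNIV. cnj (x $ i) * y $ i)"

definition unit_vec :: "complex ^ 'n \<Rightarrow> bool" where
  "unit_vec x \<longleftrightarrow> cinner x x = 1"

definition orthonormal_basis :: "('n \<Rightarrow> complex ^ 'n) \<Rightarrow> bool" where
  "orthonormal_basis phi \<longleftrightarrow> (\<forall>j k. cinner (phi j) (phi k) = (if j = k then 1 else 0))"

definition bures :: "complex ^ 'n \<Rightarrow> complex ^ 'n \<Rightarrow> real" where
  "bures x y = sqrt (2 - 2 * cmod (cinner x y))"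

definition phase_u :: "('n \<Rightarrow> complex ^ 'n) \<Rightarrow> 'n \<Rightarrow> complex ^ 'n \<Rightarrow> complex" where
  "phase_u phi k psi =
     (if cinner (phi k) psi \<noteq> 0 then cinner (phi k) psi / complex_of_real (cmod (cinner (phi k) psi)) else 1)"

definition imposition :: "('n \<Rightarrow> complex ^ 'n) \<Rightarrow> complex ^ 'n \<Rightarrow> complex ^ 'n \<Rightarrow> complex ^ 'n" where
  "imposition phi Phi psi =
     (\<Sum>k\<in>UNIV. (complex_of_real (cmod (cinner (phi k) Phi)) * phase_u phi k psi) *s phi k)"

end

theory Submission
  imports Defs
begin

lemma cinner_sum_left:
  "cinner (\<Sum>k\<in>UNIV. c k *s (v k :: complex ^ 'n)) y = (\<Sum>k\<in>UNIV. cnj (c k) * cinner (v k) y)"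
proof -
  have "cinner (\<Sum>k\<in>UNIV. c k *s v k) y = (\<Sum>i\<in>UNIV. \<Sum>k\<in>UNIV. cnj (c k) * (cnj (v k $ i) * y $ i))"
    unfolding cinner_def by (simp add: sum_component cnj_sum sum_distrib_left sum_distrib_right mult_ac)
  also have "\<dots> = (\<Sum>k\<in>UNIV. \<Sum>i\<in>UNIV. cnj (c k) * (cnj (v k $ i) * y $ i))"
    by (rule sum.swap)
  also have "\<dots> = (\<Sum>k\<in>UNIV. cnj (c k) * cinner (v k) y)"
    unfolding cinner_def by (simp only: sum_distrib_left)
  finally show ?thesis .
qed

lemma phase_prod: "cnj (phase_u phi k psi) * cinner (phi k) psi = complex_of_real (cmod (cinner (phi k) psi))"
proof (cases "cinner (phi k) psi = 0")
  case True thus ?thesis by (simp add: phase_u_def)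
next
  case False
  let ?b = "cinner (phi k) psi"
  have "cnj ?b * ?b = complex_of_real (cmod ?b ^ 2)"
    using complex_norm_square mult.commute by (metis complex_mult_cnj)
  thus ?thesis using False
    by (simp add: phase_u_def power2_eq_square field_simps)
qed

lemma completeness:
  fixes phi :: "'n::finite \<Rightarrow> complex ^ 'n"
  assumes "orthonormal_basis phi"
  shows "(\<Sum>k\<in>UNIV. phi k $ i * cnj (phi k $ j)) = (if i = j then 1 else 0)"
proof -
  define A :: "complex^'n^'n" where "A = (\<chi> k i. cnj (phi k $ i))"
  define B :: "complex^'n^'n" where "B = (\<chi> i k. phi k $ i)"
  have "A ** B = mat 1"
    using assms unfolding orthonormal_basis_def cinner_def
    by (simp add: A_def B_def matrix_matrix_mult_def mat_def vec_eq_iff)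
  hence "B ** A = mat 1" using matrix_left_right_inverse by blast
  hence "(B ** A) $ i $ j = mat 1 $ i $ j" by simp
  thus ?thesis by (simp add: A_def B_def matrix_matrix_mult_def mat_def)
qed

lemma parseval:
  fixes phi :: "'n::finite \<Rightarrow> complex ^ 'n"
  assumes "orthonormal_basis phi"
  shows "cinner x y = (\<Sum>k\<in>UNIV. cnj (cinner (phi k) x) * cinner (phi k) y)"
proof -
  have "(\<Sum>k\<in>UNIV. cnj (cinner (phi k) x) * cinner (phi k) y)
      = (\<Sum>k\<in>UNIV. \<Sum>i\<in>UNIV. \<Sum>j\<in>UNIV. cnj (x $ i) * y $ j * (phi k $ i * cnj (phi k $ j)))"
    unfolding cinner_def
    by (simp add: sum_distrib_left sum_distrib_right mult_ac)
  also have "\<dots> = (\<Sum>i\<in>UNIV. \<Sum>k\<in>UNIV. \<Sum>j\<in>UNIV. cnj (x $ i) * y $ j * (phi k $ i * cnj (phi k $ j)))"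
    by (rule sum.swap)
  also have "\<dots> = (\<Sum>i\<in>UNIV. \<Sum>j\<in>UNIV. \<Sum>k\<in>UNIV. cnj (x $ i) * y $ j * (phi k $ i * cnj (phi k $ j)))"
    by (rule sum.cong[OF refl], rule sum.swap)
  also have "\<dots> = (\<Sum>i\<in>UNIV. \<Sum>j\<in>UNIV. cnj (x $ i) * y $ j * (\<Sum>k\<in>UNIV. phi k $ i * cnj (phi k $ j)))"
    by (simp only: sum_distrib_left)
  also have "\<dots> = (\<Sum>i\<in>UNIV. cnj (x $ i) * y $ i)"
    by (simp add: completeness[OF assms] if_distrib cong: if_cong)
  finally show ?thesis unfolding cinner_def by simp
qed

theorem proposition2:
  fixes phi :: "'n::finite \<Rightarrow> complex ^ 'n" and Phi Psi :: "complex ^ 'n"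
  assumes "orthonormal_basis phi" and "unit_vec Phi" and "unit_vec Psi"
  shows "bures (imposition phi Phi Psi) Psi \<le> bures Psi Phi"
proof -
  let ?S = "\<Sum>k\<in>UNIV. cmod (cinner (phi k) Phi) * cmod (cinner (phi k) Psi)"
  have T: "cinner (imposition phi Phi Psi) Psi = complex_of_real ?S"
    unfolding imposition_def cinner_sum_left
    by (simp add: mult.assoc phase_prod)
  have S0: "?S \<ge> 0" by (simp add: sum_nonneg)
  have "cmod (cinner Psi Phi) \<le> (\<Sum>k\<in>UNIV. cmod (cnj (cinner (phi k) Psi) * cinner (phi k) Phi))"
    unfolding parseval[OF assms(1), of Psi Phi] by (rule norm_sum)
  also have "\<dots> = ?S" by (simp add: norm_mult mult.commute)
  finally have le: "cmod (cinner Psi Phi) \<le> ?S" .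
  have "cmod (cinner (imposition phi Phi Psi) Psi) = cmod (complex_of_real ?S)"
    using T by (simp only:)
  also have "\<dots> = ?S" using S0 by (simp only: norm_of_real abs_of_nonneg)
  finally have "cmod (cinner (imposition phi Phi Psi) Psi) = ?S" .
  thus ?thesis unfolding bures_def using le by (simp add: real_sqrt_le_iff)
qed

end
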